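(* Let $G$ be a graph, $X\subseteq T\subseteq V(G)$, $k'$ an integer with $\sigma(T)\le k'$, and $H=H_T$ the torso of $T$ in $G$. Let $(L^*,R^* )$ be an $(X,T,k')$-witness. Then for every vertex $u\in(L^*\setminus R^* )\cap T$ there are at most $k'^2$ vertices $t\in(R^*\setminus L^* )\cap T$ such that $\{u,t\}\in E(H)$.
   Context: A vertex cut of $G$ is an ordered pair $(L,R)$ with $L\cup R=V(G)$, $L\setminus R,R\setminus L\ne\emptyset$ and no edge between $L\setminus R$ and $R\setminus L$. The adhesion $\sigma(T)$ is the maximum over connected components $C$ of $G\setminus T$ of $|N_G(C)|$. The torso $H_T$ of $T$ in $G$ is the graph with vertex set $T$ and an edge $\{u,v\}$ whenever $\{u,v\}\in E(G)$ or $u,v\in N_G(D)$ for some connected component $D$ of $G\setminus T$. An $(X,T,k')$-witness is a vertex cut $(L,R)$ of $G$ with $|L\cap R|\le k'$, $|L\cap T|>|L\cap R|$, and $X\subseteq R$. *)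

theory Defs
  imports Main
begin

definition graph :: "'a set \<Rightarrow> 'a set set \<Rightarrow> bool" where
  "graph V E \<longleftrightarrow> finite V \<and> (\<forall>e\<in>E. e \<subseteq> V \<and> card e = 2)"

definition reach_in :: "'a set set \<Rightarrow> 'a set \<Rightarrow> 'a \<Rightarrow> 'a \<Rightarrow> bool" where
  "reach_in E S = (\<lambda>x y. x \<in> S \<and> y \<in> S \<and> {x, y} \<in> E)\<^sup>*\<^sup>*"

definition component_minus :: "'a set \<Rightarrow> 'a set set \<Rightarrow> 'a set \<Rightarrow> 'a set \<Rightarrow> bool" where
  "component_minus V E T C \<longleftrightarrow>
     (\<exists>v \<in> V - T. C = {w. w \<in> V - T \<and> reach_in E (V - T) v w})"

definition nbhd :: "'a set \<Rightarrow> 'a set set \<Rightarrow> 'a set \<Rightarrow> 'a set" where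
  "nbhd V E C = {v \<in> V - C. \<exists>c \<in> C. {c, v} \<in> E}"

definition adhesion :: "'a set \<Rightarrow> 'a set set \<Rightarrow> 'a set \<Rightarrow> nat" where
  "adhesion V E T = Max ({card (nbhd V E C) | C. component_minus V E T C} \<union> {0})"

definition torso_edges :: "'a set \<Rightarrow> 'a set set \<Rightarrow> 'a set \<Rightarrow> 'a set set" where
  "torso_edges V E T = {{u, v} | u v. u \<in> T \<and> v \<in> T \<and> u \<noteq> v \<and>
      ({u, v} \<in> E \<or> (\<exists>D. component_minus V E T D \<and> u \<in> nbhd V E D \<and> v \<in> nbhd V E D))}"

definition vertex_cut :: "'a set \<Rightarrow> 'a set set \<Rightarrow> 'a set \<Rightarrow> 'a set \<Rightarrow> bool" where
  "vertex_cut V E L R \<longleftrightarrow> L \<union> R = V \<and> L - R \<noteq> {} \<and> R - L \<noteq> {} \<and>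
     (\<forall>x \<in> L - R. \<forall>y \<in> R - L. {x, y} \<notin> E)"

definition witness :: "'a set \<Rightarrow> 'a set set \<Rightarrow> 'a set \<Rightarrow> 'a set \<Rightarrow> int \<Rightarrow> 'a set \<Rightarrow> 'a set \<Rightarrow> bool" where
  "witness V E X T k' L R \<longleftrightarrow> vertex_cut V E L R \<and> int (card (L \<inter> R)) \<le> k' \<and>
     card (L \<inter> T) > card (L \<inter> R) \<and> X \<subseteq> R"

end

theory Submission
  imports Defs
begin

lemma reach_sym:
  assumes "reach_in E S x y" shows "reach_in E S y x"
  using assms unfolding reach_in_def
proof (induction rule: rtranclp_induct)
  case base then show ?case by simp
next
  case (step y z)
  have "{z, y} \<in> E" using step(2) by (simp add: insert_commute)
  then have "(\<lambda>x y. x \<in> S \<and> y \<in> S \<and> {x, y} \<in> E) z y" using step(2) by simp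
  then show ?case using step(3) by (rule converse_rtranclp_into_rtranclp)
qed

lemma reach_trans:
  "reach_in E S x y \<Longrightarrow> reach_in E S y z \<Longrightarrow> reach_in E S x z"
  unfolding reach_in_def by (meson rtranclp_trans)

lemma reach_mem:
  assumes "reach_in E S x y" "x \<in> S" shows "y \<in> S"
  using assms unfolding reach_in_def by (induction rule: rtranclp_induct) auto

lemma reach_cross:
  assumes vc: "vertex_cut V E L R" and r: "reach_in E (V - T) c d"
    and c: "c \<in> L" and d: "d \<in> R"
  shows "\<exists>s \<in> L \<inter> R. reach_in E (V - T) c s"
proof -
  have "d \<in> R \<longrightarrow> (\<exists>s \<in> L \<inter> R. reach_in E (V - T) c s)"
    using r unfolding reach_in_def
  proof (induction rule: rtranclp_induct)
    case base
    then show ?case using c by auto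
  next
    case (step y z)
    show ?case
    proof
      assume zR: "z \<in> R"
      show "\<exists>s \<in> L \<inter> R. (\<lambda>x y. x \<in> V - T \<and> y \<in> V - T \<and> {x, y} \<in> E)\<^sup>*\<^sup>* c s"
      proof (cases "y \<in> R")
        case True then show ?thesis using step by blast
      next
        case False
        have "y \<in> L" using False step(2) vc unfolding vertex_cut_def by auto
        then have "z \<in> L" using False zR step(2) vc unfolding vertex_cut_def by blast
        moreover have "(\<lambda>x y. x \<in> V - T \<and> y \<in> V - T \<and> {x, y} \<in> E)\<^sup>*\<^sup>* c z"
          using step(1,2) by (rule rtranclp.rtrancl_into_rtrancl)
        ultimately show ?thesis using zR by blast
      qed
    qed
  qed
  then show ?thesis using d by blast
qed

theorem lemma5p14:
  fixes V :: "'a set" and E :: "'a set set" and X T L R :: "'a set" and k' :: int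
  assumes "graph V E"
    and "X \<subseteq> T" and "T \<subseteq> V"
    and "int (adhesion V E T) \<le> k'"
    and "witness V E X T k' L R"
  shows "\<forall>u \<in> (L - R) \<inter> T.
           int (card {t \<in> (R - L) \<inter> T. {u, t} \<in> torso_edges V E T}) \<le> k' ^ 2"
proof
  fix u assume u: "u \<in> (L - R) \<inter> T"
  define comp where "comp s = {w. w \<in> V - T \<and> reach_in E (V - T) s w}" for s
  have finV: "finite V" using assms(1) unfolding graph_def by auto
  have vc: "vertex_cut V E L R" using assms(5) unfolding witness_def by auto
  have LRV: "L \<union> R = V" using vc unfolding vertex_cut_def by auto
  have noedge: "\<And>x y. x \<in> L - R \<Longrightarrow> y \<in> R - L \<Longrightarrow> {x, y} \<notin> E"
    using vc unfolding vertex_cut_def by auto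
  let ?A = "{t \<in> (R - L) \<inter> T. {u, t} \<in> torso_edges V E T}"
  have sub: "?A \<subseteq> (\<Union>s \<in> (L \<inter> R) - T. nbhd V E (comp s))"
  proof
    fix t assume t: "t \<in> ?A"
    then have tT: "t \<in> (R - L) \<inter> T" and ed: "{u, t} \<in> torso_edges V E T" by auto
    have "u \<noteq> t" using u tT by auto
    from ed obtain a b where ab: "{u, t} = {a, b}" "a \<in> T" "b \<in> T" "a \<noteq> b"
      "{a, b} \<in> E \<or> (\<exists>D. component_minus V E T D \<and> a \<in> nbhd V E D \<and> b \<in> nbhd V E D)"
      unfolding torso_edges_def by blast
    have "{u, t} \<notin> E" using noedge u tT by auto
    with ab obtain D where D: "component_minus V E T D" "u \<in> nbhd V E D" "t \<in> nbhd V E D"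
      by (metis doubleton_eq_iff)
    from D(1) obtain v where v: "v \<in> V - T" "D = comp v"
      unfolding component_minus_def comp_def by blast
    from D(2) obtain c where c: "c \<in> D" "{c, u} \<in> E" unfolding nbhd_def by auto
    from D(3) obtain d where d: "d \<in> D" "{d, t} \<in> E" unfolding nbhd_def by auto
    have cV: "c \<in> V" "d \<in> V" using c d v unfolding comp_def by auto
    have cL: "c \<in> L"
    proof (rule ccontr)
      assume "c \<notin> L"
      then have "c \<in> R - L" using cV LRV by auto
      then show False using noedge[of u c] u c(2) by (auto simp: insert_commute)
    qed
    have dR: "d \<in> R"
    proof (rule ccontr)
      assume "d \<notin> R"
      then have "d \<in> L - R" using cV LRV by auto
      then show False using noedge[of d t] tT d(2) by auto
    qed
    have rc: "reach_in E (V - T) v c" and rd: "reach_in E (V - T) v d"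
      using c d v unfolding comp_def by auto
    have "reach_in E (V - T) c d" using reach_trans[OF reach_sym[OF rc] rd] .
    then obtain s where s: "s \<in> L \<inter> R" "reach_in E (V - T) c s"
      using reach_cross[OF vc _ cL dR] by blast
    have vs: "reach_in E (V - T) v s" using reach_trans[OF rc s(2)] .
    have sVT: "s \<in> V - T" using reach_mem[OF vs v(1)] .
    have "comp v = comp s"
    proof (rule set_eqI)
      fix w
      have "reach_in E (V - T) v w \<longleftrightarrow> reach_in E (V - T) s w"
        using reach_trans[OF vs, of w] reach_trans[OF reach_sym[OF vs], of w] by blast
      then show "w \<in> comp v \<longleftrightarrow> w \<in> comp s" unfolding comp_def by simp
    qed
    then show "t \<in> (\<Union>s \<in> (L \<inter> R) - T. nbhd V E (comp s))"
      using D(3) v s(1) sVT by auto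
  qed
  have finS: "finite ((L \<inter> R) - T)" using finV LRV
    by (metis Diff_subset Int_lower2 Un_upper2 finite_subset)
  have finN: "\<And>C. finite (nbhd V E C)" using finV unfolding nbhd_def by auto
  have "card ?A \<le> card (\<Union>s \<in> (L \<inter> R) - T. nbhd V E (comp s))"
    using sub finS finN by (intro card_mono) auto
  also have "\<dots> \<le> (\<Sum>s \<in> (L \<inter> R) - T. card (nbhd V E (comp s)))"
    using finS by (rule card_UN_le)
  also have "\<dots> \<le> (\<Sum>s \<in> (L \<inter> R) - T. adhesion V E T)"
  proof (rule sum_mono)
    fix s assume s: "s \<in> (L \<inter> R) - T"
    then have sV: "s \<in> V - T" using LRV by auto
    have cm: "component_minus V E T (comp s)"
      unfolding component_minus_def comp_def using sV by blast
    have fin: "finite ({card (nbhd V E C) | C. component_minus V E T C} \<union> {0})"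
    proof -
      have "{card (nbhd V E C) | C. component_minus V E T C} \<subseteq> (\<lambda>v. card (nbhd V E (comp v))) ` (V - T)"
        unfolding component_minus_def comp_def by blast
      then show ?thesis using finV by (meson finite_Diff finite_Un finite_imageI finite_insert finite.emptyI finite_subset)
    qed
    show "card (nbhd V E (comp s)) \<le> adhesion V E T"
      unfolding adhesion_def using cm fin by (intro Max_ge) auto
  qed
  also have "\<dots> = card ((L \<inter> R) - T) * adhesion V E T" by simp
  also have "\<dots> \<le> card (L \<inter> R) * adhesion V E T"
    using finV LRV by (intro mult_right_mono card_mono) (auto intro: finite_subset)
  finally have le: "card ?A \<le> card (L \<inter> R) * adhesion V E T" .
  have k1: "int (card (L \<inter> R)) \<le> k'" using assms(5) unfolding witness_def by auto
  have "int (card ?A) \<le> int (card (L \<inter> R)) * int (adhesion V E T)"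
    using of_nat_mono[OF le] by (simp only: of_nat_mult)
  also have "\<dots> \<le> k' * k'"
    by (rule mult_mono[OF k1 assms(4)]) (use k1 in simp_all)
  finally have "int (card ?A) \<le> k' * k'" .
  then show "int (card ?A) \<le> k' ^ 2" by (simp only: power2_eq_square)
qed

end
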